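(* Let $(b(n))_{n\in\mathbb{N}}$ be a bounded sequence of complex numbers such that for every $\alpha\in[0,1]$, $$\lim_{M\to\infty}\limsup_{N\to\infty}\frac1N\sum_{n=1}^N\Big|\frac1M\sum_{m=1}^M e(m\alpha)\, b(Mn+m)\Big|=0.$$ Then $$\lim_{N\to\infty}\sup_{\alpha\in[0,1]}\Big|\frac1N\sum_{n=1}^N e(n\alpha)\, b(n)\Big|=0.$$
   Context: $e(t)=e^{2\pi i t}$ for $t\in\mathbb{R}$. *)

theory Defs
  imports "HOL-Analysis.Analysis"
begin

definition e :: "real \<Rightarrow> complex" where
  "e t = exp (2 * of_real pi * \<i> * of_real t)"

end

theory Submission
  imports Defs
begin

lemma e_add: "e (x + y) = e x * e y"
  unfolding e_def by (simp add: distrib_left distrib_right exp_add[symmetric] algebra_simps)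

lemma norm_e: "cmod (e x) = 1"
  unfolding e_def by (simp add: norm_exp_eq_Re)

lemma norm_e_diff: "cmod (e x - e y) \<le> 2 * pi * \<bar>x - y\<bar>"
proof -
  have "e x - e y = e y * (e (x - y) - 1)" using e_add[of y "x - y"] by (simp add: algebra_simps)
  hence "cmod (e x - e y) = cmod (e (x - y) - 1)" by (simp add: norm_mult norm_e)
  also have "e (x - y) = exp (\<i> * of_real (2*pi*(x-y)))" unfolding e_def by (simp add: algebra_simps)
  also have "cmod (exp (\<i> * of_real (2*pi*(x-y))) - 1) = 2 * \<bar>sin (2*pi*(x-y)/2)\<bar>"
    by (rule dist_exp_i_1)
  also have "\<dots> \<le> 2 * \<bar>2*pi*(x-y)/2\<bar>" using abs_sin_x_le_abs_x by simp
  also have "\<dots> = 2 * pi * \<bar>x - y\<bar>" by (simp add: abs_mult)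
  finally show ?thesis .
qed

lemma block_sum:
  fixes f :: "nat \<Rightarrow> 'a::comm_monoid_add"
  shows "(\<Sum>n=1..M*K. f n) = (\<Sum>k<K. \<Sum>m=1..M. f (M*k+m))"
proof (induction K)
  case 0 then show ?case by simp
next
  case (Suc K)
  have "(\<Sum>n=1..M*K + M. f n) = (\<Sum>n=1..M*K. f n) + (\<Sum>n=M*K+1..M*K+M. f n)"
    by (rule sum.ub_add_nat) simp
  also have "(\<Sum>n=M*K+1..M*K+M. f n) = (\<Sum>m=1..M. f (M*K+m))"
    using sum.shift_bounds_cl_nat_ivl[of f 1 "M*K" M] by (simp add: add.commute)
  finally show ?case using Suc by (simp add: add.commute)
qed


definition AA :: "(nat \<Rightarrow> complex) \<Rightarrow> nat \<Rightarrow> nat \<Rightarrow> real \<Rightarrow> real" where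
  "AA b M k \<beta> = cmod ((1 / of_nat M) * (\<Sum>m=1..M. e (real m * \<beta>) * b (M * k + m)))"

definition SS :: "(nat \<Rightarrow> complex) \<Rightarrow> nat \<Rightarrow> nat \<Rightarrow> real \<Rightarrow> real" where
  "SS b M K \<beta> = (1 / real K) * (\<Sum>k=1..K. AA b M k \<beta>)"

lemma AA_nonneg: "AA b M k \<beta> \<ge> 0" unfolding AA_def by simp
lemma SS_nonneg: "SS b M K \<beta> \<ge> 0" unfolding SS_def by (simp add: AA_nonneg sum_nonneg)

lemma AA_alt: "real M * AA b M k \<beta> = cmod (\<Sum>m=1..M. e (real m * \<beta>) * b (M * k + m))"
  unfolding AA_def by (cases "M = 0") (auto simp: norm_mult norm_divide)

lemma AA_le:
  assumes B: "\<And>n. cmod (b n) \<le> B"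
  shows "AA b M k \<beta> \<le> B"
proof (cases "M = 0")
  case True
  then show ?thesis using B[of 0] by (simp add: AA_def) (meson norm_ge_zero order_trans)
next
  case False
  have "real M * AA b M k \<beta> \<le> (\<Sum>m=1..M. cmod (e (real m * \<beta>) * b (M * k + m)))"
    unfolding AA_alt by (rule norm_sum)
  also have "\<dots> \<le> (\<Sum>m=1..M. B)"
    by (rule sum_mono) (simp add: norm_mult norm_e B)
  also have "\<dots> = real M * B" by simp
  finally show ?thesis using False by simp
qed

lemma AA_cont:
  assumes B: "\<And>n. cmod (b n) \<le> B"
  shows "AA b M k \<beta> \<le> AA b M k \<alpha> + 2 * pi * real M * B * \<bar>\<beta> - \<alpha>\<bar>"
proof (cases "M = 0")
  case True
  have B0: "B \<ge> 0" using B[of 0] norm_ge_zero order_trans by blast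
  then show ?thesis using True by (simp add: AA_def)
next
  case False
  have B0: "B \<ge> 0" using B[of 0] norm_ge_zero order_trans by blast
  have eq: "(\<Sum>m=1..M. e (real m * \<beta>) * b (M * k + m)) =
     (\<Sum>m=1..M. e (real m * \<alpha>) * b (M * k + m)) + (\<Sum>m=1..M. (e (real m * \<beta>) - e (real m * \<alpha>)) * b (M * k + m))"
    by (simp add: sum.distrib[symmetric] algebra_simps)
  have "real M * AA b M k \<beta> \<le> real M * AA b M k \<alpha> + cmod (\<Sum>m=1..M. (e (real m * \<beta>) - e (real m * \<alpha>)) * b (M * k + m))"
    unfolding AA_alt eq by (rule norm_triangle_ineq)
  also have "cmod (\<Sum>m=1..M. (e (real m * \<beta>) - e (real m * \<alpha>)) * b (M * k + m)) \<le>
      (\<Sum>m=1..M. cmod ((e (real m * \<beta>) - e (real m * \<alpha>)) * b (M * k + m)))"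
    by (rule norm_sum)
  also have "\<dots> \<le> (\<Sum>m=1..M. 2 * pi * real M * \<bar>\<beta> - \<alpha>\<bar> * B)"
  proof (rule sum_mono)
    fix m assume m: "m \<in> {1..M}"
    have "cmod (e (real m * \<beta>) - e (real m * \<alpha>)) \<le> 2 * pi * \<bar>real m * \<beta> - real m * \<alpha>\<bar>"
      by (rule norm_e_diff)
    also have "\<dots> = 2 * pi * real m * \<bar>\<beta> - \<alpha>\<bar>"
      by (simp add: right_diff_distrib[symmetric] abs_mult)
    also have "\<dots> \<le> 2 * pi * real M * \<bar>\<beta> - \<alpha>\<bar>"
      using m by (intro mult_right_mono mult_left_mono) auto
    finally have h: "cmod (e (real m * \<beta>) - e (real m * \<alpha>)) \<le> 2 * pi * real M * \<bar>\<beta> - \<alpha>\<bar>" .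
    show "cmod ((e (real m * \<beta>) - e (real m * \<alpha>)) * b (M * k + m)) \<le> 2 * pi * real M * \<bar>\<beta> - \<alpha>\<bar> * B"
      unfolding norm_mult by (rule mult_mono[OF h B]) auto
  qed
  also have "\<dots> = real M * (2 * pi * real M * B * \<bar>\<beta> - \<alpha>\<bar>)" by simp
  finally have "real M * AA b M k \<beta> \<le> real M * (AA b M k \<alpha> + 2 * pi * real M * B * \<bar>\<beta> - \<alpha>\<bar>)"
    by (simp add: algebra_simps)
  then show ?thesis using False by simp
qed

lemma SS_cont:
  assumes B: "\<And>n. cmod (b n) \<le> B"
  shows "SS b M K \<beta> \<le> SS b M K \<alpha> + 2 * pi * real M * B * \<bar>\<beta> - \<alpha>\<bar>"
proof (cases "K = 0")
  case True
  have B0: "B \<ge> 0" using B[of 0] norm_ge_zero order_trans by blast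
  then show ?thesis using True by (simp add: SS_def)
next
  case False
  have "(\<Sum>k=1..K. AA b M k \<beta>) \<le> (\<Sum>k=1..K. AA b M k \<alpha> + 2 * pi * real M * B * \<bar>\<beta> - \<alpha>\<bar>)"
    by (rule sum_mono) (rule AA_cont[OF B])
  also have "\<dots> = (\<Sum>k=1..K. AA b M k \<alpha>) + real K * (2 * pi * real M * B * \<bar>\<beta> - \<alpha>\<bar>)"
    by (simp add: sum.distrib)
  finally show ?thesis using False unfolding SS_def by (simp add: field_simps)
qed


lemma decomp:
  assumes B: "\<And>n. cmod (b n) \<le> B" and M: "M > 0"
  shows "cmod ((1 / of_nat N) * (\<Sum>n=1..N. e (real n * \<beta>) * b n))
           \<le> SS b M (N div M) \<beta> + 2 * real M * B / real N"
proof -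
  have B0: "B \<ge> 0" using B[of 0] norm_ge_zero order_trans by blast
  define K where "K = N div M"
  define f where "f n = e (real n * \<beta>) * b n" for n
  have MK: "M * K \<le> N" unfolding K_def by (simp add: mult.commute)
  have NMK: "N - M * K < M" unfolding K_def using M
    by (metis minus_mult_div_eq_mod mod_less_divisor)
  have split: "(\<Sum>n=1..N. f n) = (\<Sum>n=1..M*K. f n) + (\<Sum>n=M*K+1..N. f n)"
    using sum.ub_add_nat[of 1 "M*K" f "N - M*K"] MK by simp
  have tail: "cmod (\<Sum>n=M*K+1..N. f n) \<le> real M * B"
  proof -
    have "cmod (\<Sum>n=M*K+1..N. f n) \<le> (\<Sum>n=M*K+1..N. B)"
      by (rule sum_norm_le) (simp add: f_def norm_mult norm_e B)
    also have "\<dots> = real (N - M*K) * B" by simp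
    also have "\<dots> \<le> real M * B" using NMK B0 by (intro mult_right_mono) auto
    finally show ?thesis .
  qed
  have blk: "cmod (\<Sum>m=1..M. f (M*k+m)) = real M * AA b M k \<beta>" for k
  proof -
    have "(\<Sum>m=1..M. f (M*k+m)) = e (real (M*k) * \<beta>) * (\<Sum>m=1..M. e (real m * \<beta>) * b (M * k + m))"
      unfolding f_def sum_distrib_left
      by (rule sum.cong) (auto simp: e_add[symmetric] algebra_simps)
    then show ?thesis by (simp add: AA_alt norm_mult norm_e)
  qed
  have main: "cmod (\<Sum>n=1..M*K. f n) \<le> real M * B + real M * (\<Sum>k=1..K. AA b M k \<beta>)"
  proof -
    have "cmod (\<Sum>n=1..M*K. f n) \<le> (\<Sum>k<K. cmod (\<Sum>m=1..M. f (M*k+m)))"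
      unfolding block_sum by (rule norm_sum)
    also have "\<dots> = (\<Sum>k<K. real M * AA b M k \<beta>)" using blk by (intro sum.cong) auto
    also have "\<dots> \<le> (\<Sum>k\<in>{0..K}. real M * AA b M k \<beta>)"
      by (rule sum_mono2) (auto simp: AA_nonneg)
    also have "\<dots> = real M * AA b M 0 \<beta> + (\<Sum>k=1..K. real M * AA b M k \<beta>)"
      by (simp add: sum.atLeast_Suc_atMost)
    also have "\<dots> \<le> real M * B + real M * (\<Sum>k=1..K. AA b M k \<beta>)"
      using AA_le[OF B, where M=M and k=0 and \<beta>=\<beta>] by (simp add: sum_distrib_left mult_left_mono)
    finally show ?thesis .
  qed
  have tot: "cmod (\<Sum>n=1..N. f n) \<le> 2 * real M * B + real M * (\<Sum>k=1..K. AA b M k \<beta>)"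
    using split main tail norm_triangle_ineq[of "\<Sum>n=1..M*K. f n" "\<Sum>n=M*K+1..N. f n"] by simp
  show ?thesis
  proof (cases "N = 0")
    case True
    then show ?thesis using SS_nonneg by simp
  next
    case False
    have T0: "(\<Sum>k=1..K. AA b M k \<beta>) \<ge> 0" by (simp add: sum_nonneg AA_nonneg)
    have key: "real M * (\<Sum>k=1..K. AA b M k \<beta>) / real N \<le> SS b M K \<beta>"
    proof (cases "K = 0")
      case True then show ?thesis by (simp add: SS_def)
    next
      case False
      have "real M / real N \<le> 1 / real K"
        using MK False \<open>N \<noteq> 0\<close> by (simp add: field_simps) (metis of_nat_le_iff of_nat_mult)
      then have "real M / real N * (\<Sum>k=1..K. AA b M k \<beta>) \<le> 1 / real K * (\<Sum>k=1..K. AA b M k \<beta>)"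
        using T0 by (rule mult_right_mono)
      then show ?thesis by (simp add: SS_def)
    qed
    have "cmod ((1 / of_nat N) * (\<Sum>n=1..N. f n)) = cmod (\<Sum>n=1..N. f n) / real N"
      by (simp add: norm_mult norm_divide)
    also have "\<dots> \<le> (2 * real M * B + real M * (\<Sum>k=1..K. AA b M k \<beta>)) / real N"
      using tot by (simp add: divide_right_mono)
    also have "\<dots> = real M * (\<Sum>k=1..K. AA b M k \<beta>) / real N + 2 * real M * B / real N"
      by (simp add: add_divide_distrib)
    also have "\<dots> \<le> SS b M K \<beta> + 2 * real M * B / real N" using key by simp
    finally show ?thesis unfolding f_def K_def .
  qed
qed


theorem lemma2p2:
  fixes b :: "nat \<Rightarrow> complex"
  assumes bdd: "bounded (range b)"
    and hyp: "\<forall>\<alpha>\<in>{0..1::real}.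
      ((\<lambda>M::nat. limsup (\<lambda>N::nat. ereal ((1 / real N) *
          (\<Sum>n=1..N. cmod ((1 / of_nat M) * (\<Sum>m=1..M. e (real m * \<alpha>) * b (M * n + m)))))))
        \<longlonglongrightarrow> 0)"
  shows "(\<lambda>N::nat. SUP \<alpha>\<in>{0..1::real}.
            cmod ((1 / of_nat N) * (\<Sum>n=1..N. e (real n * \<alpha>) * b n))) \<longlonglongrightarrow> 0"
proof -
  define F where "F N \<beta> = cmod ((1 / of_nat N) * (\<Sum>n=1..N. e (real n * \<beta>) * b n))" for N \<beta>
  obtain B where B: "\<And>n. cmod (b n) \<le> B" using bdd unfolding bounded_iff by auto
  have B0: "B \<ge> 0" using B[of 0] norm_ge_zero order_trans by blast
  have Fbound: "F N \<beta> \<le> B" for N \<beta>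
  proof (cases "N = 0")
    case True then show ?thesis using B0 by (simp add: F_def)
  next
    case False
    have "cmod (\<Sum>n=1..N. e (real n * \<beta>) * b n) \<le> (\<Sum>n=1..N. B)"
      by (rule sum_norm_le) (simp add: norm_mult norm_e B)
    also have "\<dots> = real N * B" by simp
    finally show ?thesis using False by (simp add: F_def norm_mult norm_divide field_simps)
  qed
  have F0: "F N \<beta> \<ge> 0" for N \<beta> by (simp add: F_def)
  have local: "\<exists>\<delta>>0. eventually (\<lambda>N. \<forall>\<beta>\<in>ball \<alpha> \<delta>. F N \<beta> \<le> 3 * \<epsilon>) sequentially"
    if \<epsilon>: "\<epsilon> > 0" and \<alpha>: "\<alpha> \<in> {0..1}" for \<epsilon> \<alpha>
  proof -
    have lim: "(\<lambda>M. limsup (\<lambda>N. ereal (SS b M N \<alpha>))) \<longlonglongrightarrow> 0"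
      using hyp \<alpha> unfolding SS_def AA_def by simp
    have "eventually (\<lambda>M. limsup (\<lambda>N. ereal (SS b M N \<alpha>)) < ereal \<epsilon>) sequentially"
      by (rule order_tendstoD(2)[OF lim]) (use \<epsilon> in simp)
    then obtain M0 where M0: "\<And>M. M \<ge> M0 \<Longrightarrow> limsup (\<lambda>N. ereal (SS b M N \<alpha>)) < ereal \<epsilon>"
      unfolding eventually_sequentially by auto
    define M where "M = max M0 1"
    have Mpos: "M > 0" unfolding M_def by simp
    have "eventually (\<lambda>N. ereal (SS b M N \<alpha>) < ereal \<epsilon>) sequentially"
      by (rule Limsup_lessD) (use M0[of M] in \<open>simp add: M_def\<close>)
    then obtain K0 where K0: "\<And>K. K \<ge> K0 \<Longrightarrow> SS b M K \<alpha> < \<epsilon>"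
      unfolding eventually_sequentially by auto
    define C where "C = 2 * pi * real M * B"
    have C0: "C \<ge> 0" unfolding C_def using B0 by simp
    define \<delta> where "\<delta> = \<epsilon> / (C + 1)"
    have \<delta>0: "\<delta> > 0" unfolding \<delta>_def using C0 \<epsilon> by simp
    define N0 where "N0 = M * K0 + nat \<lceil>2 * real M * B / \<epsilon>\<rceil> + 1"
    have "\<forall>N\<ge>N0. \<forall>\<beta>\<in>ball \<alpha> \<delta>. F N \<beta> \<le> 3 * \<epsilon>"
    proof (intro allI impI ballI)
      fix N \<beta> assume N: "N \<ge> N0" and \<beta>: "\<beta> \<in> ball \<alpha> \<delta>"
      have "K0 \<le> N div M"
      proof -
        have "M * K0 \<le> N" using N unfolding N0_def by simp
        then have "(M * K0) div M \<le> N div M" by (rule div_le_mono)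
        then show ?thesis using Mpos by simp
      qed
      then have h1: "SS b M (N div M) \<alpha> < \<epsilon>" by (rule K0)
      have "C * \<bar>\<beta> - \<alpha>\<bar> \<le> C * \<delta>"
        using \<beta> C0 by (intro mult_left_mono) (auto simp: dist_real_def abs_minus_commute)
      also have "C * \<delta> \<le> \<epsilon>" unfolding \<delta>_def using C0 \<epsilon> by (simp add: field_simps)
      finally have h2: "C * \<bar>\<beta> - \<alpha>\<bar> \<le> \<epsilon>" .
      have Npos: "real N > 0" using N unfolding N0_def by simp
      have "2 * real M * B / \<epsilon> \<le> real N"
      proof -
        have "2 * real M * B / \<epsilon> \<le> real (nat \<lceil>2 * real M * B / \<epsilon>\<rceil>)" by linarith
        also have "\<dots> \<le> real N"
        proof -
          have "nat \<lceil>2 * real M * B / \<epsilon>\<rceil> \<le> N" using N unfolding N0_def by linarith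
          then show ?thesis by (rule of_nat_mono)
        qed
        finally show ?thesis .
      qed
      then have h3: "2 * real M * B / real N \<le> \<epsilon>" using Npos \<epsilon> by (simp add: field_simps)
      have "F N \<beta> \<le> SS b M (N div M) \<beta> + 2 * real M * B / real N"
        unfolding F_def by (rule decomp[OF B Mpos])
      also have "SS b M (N div M) \<beta> \<le> SS b M (N div M) \<alpha> + C * \<bar>\<beta> - \<alpha>\<bar>"
        unfolding C_def by (rule SS_cont[OF B])
      finally show "F N \<beta> \<le> 3 * \<epsilon>" using h1 h2 h3 by simp
    qed
    then show ?thesis using \<delta>0 unfolding eventually_sequentially by blast
  qed
  have unif: "eventually (\<lambda>N. \<forall>\<beta>\<in>{0..1}. F N \<beta> \<le> 3 * \<epsilon>) sequentially" if \<epsilon>: "\<epsilon> > 0" for \<epsilon>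
  proof -
    have ex: "\<forall>\<alpha>\<in>{0..1::real}. \<exists>\<delta>. \<delta> > 0 \<and>
        eventually (\<lambda>N. \<forall>\<beta>\<in>ball \<alpha> \<delta>. F N \<beta> \<le> 3 * \<epsilon>) sequentially"
      using local[OF \<epsilon>] by blast
    from bchoice[OF ex] obtain d where d: "\<forall>\<alpha>\<in>{0..1::real}. d \<alpha> > 0 \<and>
        eventually (\<lambda>N. \<forall>\<beta>\<in>ball \<alpha> (d \<alpha>). F N \<beta> \<le> 3 * \<epsilon>) sequentially"
      by blast
    have cov: "{0..1::real} \<subseteq> (\<Union>\<alpha>\<in>{0..1}. ball \<alpha> (d \<alpha>))"
    proof
      fix x :: real assume x: "x \<in> {0..1}"
      then have "x \<in> ball x (d x)" using d by simp
      then show "x \<in> (\<Union>\<alpha>\<in>{0..1}. ball \<alpha> (d \<alpha>))" using x by blast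
    qed
    obtain T where T: "T \<subseteq> {0..1}" "finite T" "{0..1::real} \<subseteq> (\<Union>\<alpha>\<in>T. ball \<alpha> (d \<alpha>))"
      by (rule compactE_image[OF compact_Icc _ cov]) auto
    have "eventually (\<lambda>N. \<forall>\<alpha>\<in>T. \<forall>\<beta>\<in>ball \<alpha> (d \<alpha>). F N \<beta> \<le> 3 * \<epsilon>) sequentially"
    proof (subst eventually_ball_finite_distrib[OF T(2)], intro ballI)
      fix \<alpha> assume "\<alpha> \<in> T"
      then show "eventually (\<lambda>N. \<forall>\<beta>\<in>ball \<alpha> (d \<alpha>). F N \<beta> \<le> 3 * \<epsilon>) sequentially"
        using T(1) d by blast
    qed
    then show ?thesis
      by eventually_elim (use T(3) in blast)
  qed
  have bdda: "bdd_above ((\<lambda>\<beta>. F N \<beta>) ` {0..1})" for N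
    using Fbound by (intro bdd_aboveI2) auto
  have "(\<lambda>N. SUP \<beta>\<in>{0..1::real}. F N \<beta>) \<longlonglongrightarrow> 0"
  proof (rule order_tendstoI)
    fix a :: real assume "a < 0"
    then show "eventually (\<lambda>N. a < (SUP \<beta>\<in>{0..1::real}. F N \<beta>)) sequentially"
    proof (intro always_eventually allI)
      fix N
      have "0 \<le> (SUP \<beta>\<in>{0..1::real}. F N \<beta>)"
        by (rule cSUP_upper2[OF bdda, of 0]) (auto simp: F0)
      then show "a < (SUP \<beta>\<in>{0..1::real}. F N \<beta>)" using \<open>a < 0\<close> by simp
    qed
  next
    fix a :: real assume a: "0 < a"
    have "eventually (\<lambda>N. \<forall>\<beta>\<in>{0..1}. F N \<beta> \<le> 3 * (a / 4)) sequentially"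
      using a by (intro unif) simp
    then show "eventually (\<lambda>N. (SUP \<beta>\<in>{0..1::real}. F N \<beta>) < a) sequentially"
    proof eventually_elim
      case (elim N)
      have "(SUP \<beta>\<in>{0..1::real}. F N \<beta>) \<le> 3 * (a / 4)"
        using elim by (intro cSUP_least) auto
      then show ?case using a by simp
    qed
  qed
  then show ?thesis unfolding F_def .
qed

end
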